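(* Let $X$ be a complex Banach space. For every $\gamma\in\mathrm{lin}(\Gamma(\mathbb{D}))\otimes X$, $d^{\widehat{\mathcal{B}}}_1(\gamma)=\inf\left\{\sum_{i=1}^n\frac{|\lambda_i|}{1-|z_i|^2}\|x_i\|\right\}$ and $d^{\widehat{\mathcal{B}}}_\infty(\gamma)=\inf\left\{\sup_{g\in B_{\widehat{\mathcal{B}}(\mathbb{D})}}\sum_{i=1}^n|\lambda_i||g'(z_i)|\|x_i\|\right\}$, where both infima are taken over all representations $\gamma=\sum_{i=1}^n\lambda_i\gamma_{z_i}\otimes x_i$.
   Context: $\mathbb{D}=\{z\in\mathbb{C}:|z|<1\}$. $\widehat{\mathcal{B}}(\mathbb{D},Y)$ (for a complex Banach space $Y$) is the Banach space of holomorphic $f:\mathbb{D}\to Y$ with $f(0)=0$ and $p_{\mathcal{B}}(f)=\sup_{z\in\mathbb{D}}(1-|z|^2)\|f'(z)\|<\infty$, normed by $p_{\mathcal{B}}$; $\widehat{\mathcal{B}}(\mathbb{D})=\widehat{\mathcal{B}}(\mathbb{D},\mathbb{C})$ with closed unit ball $B_{\widehat{\mathcal{B}}(\mathbb{D})}$. For $z\in\mathbb{D}$, $x\in X$, $\gamma_z\otimes x$ is the functional on $\widehat{\mathcal{B}}(\mathbb{D},X^* )$ given by $(\gamma_z\otimes x)(f)=\langle f'(z),x\rangle$, and $\mathrm{lin}(\Gamma(\mathbb{D}))\otimes X$ is the linear span of all $\gamma_z\otimes x$ in $\widehat{\mathcal{B}}(\mathbb{D},X^* )^*$, with elements written $\sum_{i=1}^n\lambda_i\gamma_{z_i}\otimes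 x_i$ (non-uniquely). With infima over all such representations of $\gamma$: $d^{\widehat{\mathcal{B}}}_1(\gamma)=\inf\left(\sup_{g\in B_{\widehat{\mathcal{B}}(\mathbb{D})}}\max_{1\leq i\leq n}|\lambda_i||g'(z_i)|\right)\left(\sum_{i=1}^n\|x_i\|\right)$ and $d^{\widehat{\mathcal{B}}}_\infty(\gamma)=\inf\left(\sup_{g\in B_{\widehat{\mathcal{B}}(\mathbb{D})}}\sum_{i=1}^n|\lambda_i||g'(z_i)|\right)\left(\max_{1\leq i\leq n}\|x_i\|\right)$. *)

theory Defs
  imports "HOL-Complex_Analysis.Complex_Analysis"
begin

text \<open>A complex Banach space X is modelled as a real Banach space (type class banach)
  together with a complex scalar multiplication cm compatible with the real one and
  with the norm.\<close>
definition complex_scalar :: "(complex \<Rightarrow> 'x::banach \<Rightarrow> 'x) \<Rightarrow> bool" where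
  "complex_scalar cm \<longleftrightarrow>
     (\<forall>a b x. cm a (cm b x) = cm (a * b) x) \<and>
     (\<forall>a x y. cm a (x + y) = cm a x + cm a y) \<and>
     (\<forall>a b x. cm (a + b) x = cm a x + cm b x) \<and>
     (\<forall>r x. cm (complex_of_real r) x = r *\<^sub>R x) \<and>
     (\<forall>a x. norm (cm a x) = cmod a * norm x)"

definition cdual :: "(complex \<Rightarrow> 'x::banach \<Rightarrow> 'x) \<Rightarrow> ('x \<Rightarrow> complex) \<Rightarrow> bool" where
  "cdual cm \<phi> \<longleftrightarrow>
     (\<forall>x y. \<phi> (x + y) = \<phi> x + \<phi> y) \<and>
     (\<forall>a x. \<phi> (cm a x) = a * \<phi> x) \<and>
     (\<exists>C. \<forall>x. cmod (\<phi> x) \<le> C * norm x)"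

definition dnorm :: "('x::real_normed_vector \<Rightarrow> complex) \<Rightarrow> real" where
  "dnorm \<phi> = Sup ((\<lambda>x. cmod (\<phi> x)) ` {x. norm x \<le> 1})"

text \<open>The space \<open>\<widehat>\<B>(\<D>, X*)\<close>: pairs (f, f') where f is holomorphic on the unit disc
  (in the norm of X*) with derivative f', f(0) = 0, and finite Bloch seminorm.\<close>
definition BlochX :: "(complex \<Rightarrow> 'x::banach \<Rightarrow> 'x) \<Rightarrow>
    ((complex \<Rightarrow> 'x \<Rightarrow> complex) \<times> (complex \<Rightarrow> 'x \<Rightarrow> complex)) set" where
  "BlochX cm = {(f, f'').
     (\<forall>z\<in>ball 0 1. cdual cm (f z) \<and> cdual cm (f'' z)) \<and>
     (\<forall>z\<in>ball 0 1. ((\<lambda>w. dnorm (\<lambda>x. (f w x - f z x) / (w - z) - f'' z x)) \<longlongrightarrow> 0) (at z)) \<and>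
     f 0 = (\<lambda>x. 0) \<and>
     (\<exists>C. \<forall>z\<in>ball 0 1. (1 - (cmod z)\<^sup>2) * dnorm (f'' z) \<le> C)}"

text \<open>A representation \<open>\<Sum> \<lambda>_i \<gamma>_{z_i} \<otimes> x_i\<close> is a nonempty list of triples (\<lambda>_i, z_i, x_i)
  with z_i in the unit disc.\<close>
definition valid_rep :: "(complex \<times> complex \<times> 'x) list \<Rightarrow> bool" where
  "valid_rep R \<longleftrightarrow> R \<noteq> [] \<and> (\<forall>(l, z, x) \<in> set R. z \<in> ball 0 1)"

definition eval_rep :: "(complex \<Rightarrow> 'x \<Rightarrow> complex) \<Rightarrow> (complex \<times> complex \<times> 'x) list \<Rightarrow> complex" where
  "eval_rep f'' R = sum_list (map (\<lambda>(l, z, x). l * f'' z x) R)"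

text \<open>Two representations define the same functional on \<open>\<widehat>\<B>(\<D>, X*)\<close>.\<close>
definition same_gamma :: "(complex \<Rightarrow> 'x::banach \<Rightarrow> 'x) \<Rightarrow>
    (complex \<times> complex \<times> 'x) list \<Rightarrow> (complex \<times> complex \<times> 'x) list \<Rightarrow> bool" where
  "same_gamma cm R S \<longleftrightarrow> (\<forall>(f, f'') \<in> BlochX cm. eval_rep f'' R = eval_rep f'' S)"

definition BlochBall :: "(complex \<Rightarrow> complex) set" where
  "BlochBall = {g. g holomorphic_on ball 0 1 \<and> g 0 = 0 \<and>
       (\<forall>z\<in>ball 0 1. (1 - (cmod z)\<^sup>2) * cmod (deriv g z) \<le> 1)}"

definition d1 :: "(complex \<Rightarrow> 'x::banach \<Rightarrow> 'x) \<Rightarrow> (complex \<times> complex \<times> 'x) list \<Rightarrow> real" where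
  "d1 cm R0 = Inf {(SUP g\<in>BlochBall. Max (set (map (\<lambda>(l, z, x). cmod l * cmod (deriv g z)) R)))
                    * sum_list (map (\<lambda>(l, z, x). norm x) R)
                  | R. valid_rep R \<and> same_gamma cm R R0}"

definition dinf :: "(complex \<Rightarrow> 'x::banach \<Rightarrow> 'x) \<Rightarrow> (complex \<times> complex \<times> 'x) list \<Rightarrow> real" where
  "dinf cm R0 = Inf {(SUP g\<in>BlochBall. sum_list (map (\<lambda>(l, z, x). cmod l * cmod (deriv g z)) R))
                    * Max (set (map (\<lambda>(l, z, x). norm x) R))
                  | R. valid_rep R \<and> same_gamma cm R R0}"

end

theory Submission
  imports Defs
begin

lemma bloch_bound:
  assumes "g \<in> BlochBall" "z \<in> ball 0 1"
  shows "cmod (deriv g z) \<le> 1 / (1 - (cmod z)\<^sup>2)"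
proof -
  have z: "cmod z < 1" using assms(2) by simp
  have p: "0 < 1 - (cmod z)\<^sup>2" using z norm_ge_zero[of z]
    by (metis diff_gt_0_iff_gt power_less_one_iff zero_less_one abs_of_nonneg abs_square_less_1)
  have "(1 - (cmod z)\<^sup>2) * cmod (deriv g z) \<le> 1" using assms unfolding BlochBall_def by auto
  then show ?thesis using p by (simp add: field_simps)
qed

lemma zero_BlochBall: "(\<lambda>_. 0) \<in> BlochBall"
  unfolding BlochBall_def by auto

lemma mobius_ineq:
  fixes z w :: complex
  shows "(1 - (cmod z)\<^sup>2) * (1 - (cmod w)\<^sup>2) \<le> (cmod (1 - cnj z * w))\<^sup>2"
proof -
  have "(cmod (1 - cnj z * w))\<^sup>2 = (cmod (z - w))\<^sup>2 + (1 - (cmod z)\<^sup>2) * (1 - (cmod w)\<^sup>2)"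
    unfolding cmod_power2 by (simp add: algebra_simps power2_eq_square)
  then show ?thesis by simp
qed

lemma extremal:
  assumes "z \<in> ball 0 1"
  shows "\<exists>g\<in>BlochBall. cmod (deriv g z) = 1 / (1 - (cmod z)\<^sup>2)"
proof -
  define c where "c = 1 - (cmod z)\<^sup>2"
  have z: "cmod z < 1" using assms by simp
  have p: "0 < c" unfolding c_def using z
    by (simp add: abs_square_less_1)
  define g where "g = (\<lambda>w. of_real c * w / (1 - cnj z * w))"
  have nz: "1 - cnj z * w \<noteq> 0" if "w \<in> ball 0 1" for w
  proof
    assume "1 - cnj z * w = 0"
    then have "cmod (cnj z * w) = 1" by (metis eq_iff_diff_eq_0 norm_one)
    moreover have "cmod (cnj z * w) < 1"
    proof -
      have "cmod z * cmod w \<le> cmod z * 1" using that by (intro mult_left_mono) auto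
      then show ?thesis using z by (simp add: norm_mult)
    qed
    ultimately show False by simp
  qed
  have der: "(g has_field_derivative of_real c / (1 - cnj z * w)\<^sup>2) (at w)" if "w \<in> ball 0 1" for w
    unfolding g_def using nz[OF that]
    by (auto intro!: derivative_eq_intros simp: field_simps power2_eq_square)
  have dg: "deriv g w = of_real c / (1 - cnj z * w)\<^sup>2" if "w \<in> ball 0 1" for w
    using der[OF that] by (rule DERIV_imp_deriv)
  have hol: "g holomorphic_on ball 0 1"
    using der holomorphic_on_def field_differentiable_def
    by (metis at_within_open field_differentiable_at_within open_ball)
  have bd: "(1 - (cmod w)\<^sup>2) * cmod (deriv g w) \<le> 1" if "w \<in> ball 0 1" for w
  proof -
    have q: "0 < (cmod (1 - cnj z * w))\<^sup>2" using nz[OF that] by simp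
    have "(1 - (cmod w)\<^sup>2) * cmod (deriv g w) = c * (1 - (cmod w)\<^sup>2) / (cmod (1 - cnj z * w))\<^sup>2"
      using dg[OF that] p by (simp add: norm_divide norm_power)
    also have "\<dots> \<le> 1" using mobius_ineq[of z w] q unfolding c_def by simp
    finally show ?thesis .
  qed
  have "g \<in> BlochBall" unfolding BlochBall_def using hol bd by (simp add: g_def)
  moreover have "cmod (deriv g z) = 1 / c"
  proof -
    have "1 - cnj z * z = of_real c" unfolding c_def
      using complex_norm_square[of z] by (simp add: mult.commute)
    then show ?thesis using dg[OF assms] p by (simp add: norm_divide norm_power power2_eq_square)
  qed
  ultimately show ?thesis unfolding c_def by blast
qed

lemma cdual_scale:
  assumes "complex_scalar cm" "cdual cm \<phi>"
  shows "\<phi> (r *\<^sub>R x) = of_real r * \<phi> x"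
  using assms unfolding complex_scalar_def cdual_def by metis


lemma pos_c: "z \<in> ball 0 1 \<Longrightarrow> 0 < 1 - (cmod (z::complex))\<^sup>2"
  by (simp add: abs_square_less_1)

lemma inf_eq:
  fixes V T :: "'a \<Rightarrow> real"
  assumes "P a" "\<And>R. P R \<Longrightarrow> 0 \<le> T R" "\<And>R. P R \<Longrightarrow> T R \<le> V R"
    "\<And>R. P R \<Longrightarrow> \<exists>R'. P R' \<and> V R' \<le> T R"
  shows "Inf {V R | R. P R} = Inf {T R | R. P R}"
proof -
  have bA: "bdd_below {V R | R. P R}" using assms(2,3)
    by (auto intro!: bdd_belowI[of _ 0] order_trans[OF _ assms(3)])
  have bB: "bdd_below {T R | R. P R}" using assms(2) by (auto intro!: bdd_belowI[of _ 0])
  have neA: "{V R | R. P R} \<noteq> {}" and neB: "{T R | R. P R} \<noteq> {}" using assms(1) by auto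
  have 1: "Inf {V R | R. P R} \<le> Inf {T R | R. P R}"
  proof (rule cInf_greatest[OF neB])
    fix b assume "b \<in> {T R | R. P R}"
    then obtain R where R: "P R" "b = T R" by auto
    then obtain R' where "P R'" "V R' \<le> T R" using assms(4) by blast
    then have "Inf {V R | R. P R} \<le> V R'" by (intro cInf_lower[OF _ bA]) auto
    then show "Inf {V R | R. P R} \<le> b" using R \<open>V R' \<le> T R\<close> by simp
  qed
  have 2: "Inf {T R | R. P R} \<le> Inf {V R | R. P R}"
  proof (rule cInf_greatest[OF neA])
    fix b assume "b \<in> {V R | R. P R}"
    then obtain R where R: "P R" "b = V R" by auto
    then have "Inf {T R | R. P R} \<le> T R" by (intro cInf_lower[OF _ bB]) auto
    then show "Inf {T R | R. P R} \<le> b" using R assms(3)[of R] by simp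
  qed
  show ?thesis using 1 2 by simp
qed

lemma same_gamma_map:
  assumes "complex_scalar cm" "valid_rep R" "same_gamma cm R R0"
    and "\<And>l z x \<phi>. (l, z, x) \<in> set R \<Longrightarrow> cdual cm \<phi> \<Longrightarrow>
            (case F (l, z, x) of (l', z', x') \<Rightarrow> z' = z \<and> l' * \<phi> x' = l * \<phi> x)"
  shows "valid_rep (map F R) \<and> same_gamma cm (map F R) R0"
proof
  have zz: "\<And>t. t \<in> set R \<Longrightarrow> fst (snd (F t)) = fst (snd t)"
  proof -
    fix t assume t: "t \<in> set R"
    obtain l z x where "t = (l, z, x)" by (cases t) auto
    moreover have "cdual cm (\<lambda>_. 0)" unfolding cdual_def by (auto intro!: exI[of _ 0])
    ultimately show "fst (snd (F t)) = fst (snd t)" using assms(4)[of l z x "\<lambda>_. 0"] t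
      by (auto split: prod.splits)
  qed
  show "valid_rep (map F R)" using assms(2) zz unfolding valid_rep_def
    by (auto split: prod.splits) (metis fst_conv snd_conv)
  show "same_gamma cm (map F R) R0" unfolding same_gamma_def
  proof (intro ballI, clarify)
    fix f f'' assume fB: "(f, f'') \<in> BlochX cm"
    have cd: "\<And>z. z \<in> ball 0 1 \<Longrightarrow> cdual cm (f'' z)" using fB unfolding BlochX_def by auto
    have "eval_rep f'' (map F R) = eval_rep f'' R"
      unfolding eval_rep_def map_map
    proof (intro arg_cong[where f=sum_list] map_cong refl)
      fix t assume t: "t \<in> set R"
      obtain l z x where tl: "t = (l, z, x)" by (cases t) auto
      have zb: "z \<in> ball 0 1" using assms(2) t tl unfolding valid_rep_def by auto
      show "((\<lambda>(l, z, x). l * f'' z x) \<circ> F) t = (case t of (l, z, x) \<Rightarrow> l * f'' z x)"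
        using assms(4)[OF t[unfolded tl] cd[OF zb]] tl
        by (auto split: prod.splits)
    qed
    also have "\<dots> = eval_rep f'' R0" using assms(3) fB unfolding same_gamma_def by auto
    finally show "eval_rep f'' (map F R) = eval_rep f'' R0" .
  qed
qed


lemma sum_list_case_mult:
  fixes c :: real
  shows "sum_list (map (\<lambda>(l, z, x). c * f l z x) R) = c * sum_list (map (\<lambda>(l, z, x). f l z x) R)"
  by (induction R) (auto simp: algebra_simps)

lemma part1_le:
  assumes "valid_rep R"
  shows "sum_list (map (\<lambda>(l, z, x). cmod l / (1 - (cmod z)\<^sup>2) * norm x) R)
     \<le> (SUP g\<in>BlochBall. Max (set (map (\<lambda>(l, z, x). cmod l * cmod (deriv g z)) R)))
         * sum_list (map (\<lambda>(l, z, x). norm x) R)" (is "?T \<le> ?S * ?N")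
proof -
  define h where "h = (\<lambda>(l::complex, z::complex, x::'a). cmod l / (1 - (cmod z)\<^sup>2))"
  have ne: "R \<noteq> []" using assms unfolding valid_rep_def by auto
  have bdd: "bdd_above ((\<lambda>g. Max (set (map (\<lambda>(l, z, x). cmod l * cmod (deriv g z)) R))) ` BlochBall)"
  proof (rule bdd_aboveI2)
    fix g assume g: "g \<in> BlochBall"
    show "Max (set (map (\<lambda>(l, z, x). cmod l * cmod (deriv g z)) R)) \<le> Max (set (map h R))"
    proof -
      have "\<forall>a\<in>set (map (\<lambda>(l, z, x). cmod l * cmod (deriv g z)) R). a \<le> Max (set (map h R))"
      proof
        fix a assume "a \<in> set (map (\<lambda>(l, z, x). cmod l * cmod (deriv g z)) R)"
        then obtain l z x where t: "(l, z, x) \<in> set R" and a: "a = cmod l * cmod (deriv g z)" by auto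
        have zb: "z \<in> ball 0 1" using assms t unfolding valid_rep_def by auto
        have "cmod l * cmod (deriv g z) \<le> h (l, z, x)"
          unfolding h_def using bloch_bound[OF g zb] by (simp add: divide_inverse mult_left_mono)
        also have "\<dots> \<le> Max (set (map h R))" using t by (intro Max_ge) auto
        finally show "a \<le> Max (set (map h R))" using a by simp
      qed
      then show ?thesis using ne by (simp add: Max_le_iff)
    qed
  qed
  have key: "cmod l / (1 - (cmod z)\<^sup>2) \<le> ?S" if t: "(l, z, x) \<in> set R" for l z x
  proof -
    have zb: "z \<in> ball 0 1" using assms t unfolding valid_rep_def by auto
    obtain g where g: "g \<in> BlochBall" "cmod (deriv g z) = 1 / (1 - (cmod z)\<^sup>2)"
      using extremal[OF zb] by blast
    have "cmod l / (1 - (cmod z)\<^sup>2) = cmod l * cmod (deriv g z)" using g by simp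
    also have "\<dots> \<le> Max (set (map (\<lambda>(l, z, x). cmod l * cmod (deriv g z)) R))"
      using t by (intro Max_ge) force+
    also have "\<dots> \<le> ?S" by (rule cSUP_upper[OF g(1) bdd])
    finally show ?thesis .
  qed
  have "?T \<le> sum_list (map (\<lambda>(l, z, x). ?S * norm x) R)"
  proof (rule sum_list_mono)
    fix t assume t: "t \<in> set R"
    obtain l z x where tl: "t = (l, z, x)" by (cases t) auto
    show "(case t of (l, z, x) \<Rightarrow> cmod l / (1 - (cmod z)\<^sup>2) * norm x) \<le> (case t of (l, z, x) \<Rightarrow> ?S * norm x)"
    proof -
      have "cmod l / (1 - (cmod z)\<^sup>2) * norm x \<le> ?S * norm x"
        by (rule mult_right_mono[OF key]) (use t tl in auto)
      then show ?thesis unfolding tl prod.case .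
    qed
  qed
  also have "\<dots> = ?S * ?N"
    by (rule sum_list_case_mult)
  finally show ?thesis .
qed


lemma sgn_cmod: "sgn (l::complex) * of_real (cmod l) = l"
  by (cases "l = 0") (simp_all add: sgn_div_norm scaleR_conv_of_real field_simps)

lemma part1_ex:
  assumes cs: "complex_scalar cm" and v: "valid_rep R" and sg: "same_gamma cm R R0"
  shows "\<exists>R'. (valid_rep R' \<and> same_gamma cm R' R0) \<and>
     (SUP g\<in>BlochBall. Max (set (map (\<lambda>(l, z, x). cmod l * cmod (deriv g z)) R')))
         * sum_list (map (\<lambda>(l, z, x). norm x) R')
     \<le> sum_list (map (\<lambda>(l, z, x). cmod l / (1 - (cmod z)\<^sup>2) * norm x) R)"
proof -
  define F where "F = (\<lambda>(l::complex, z::complex, x::'a).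
     (of_real (1 - (cmod z)\<^sup>2) * sgn l, z, (cmod l / (1 - (cmod z)\<^sup>2)) *\<^sub>R x))"
  have P: "valid_rep (map F R) \<and> same_gamma cm (map F R) R0"
  proof (rule same_gamma_map[OF cs v sg])
    fix l z x and \<phi> :: "'a \<Rightarrow> complex"
    assume t: "(l, z, x) \<in> set R" and cd: "cdual cm \<phi>"
    have zb: "z \<in> ball 0 1" using v t unfolding valid_rep_def by auto
    have c: "0 < 1 - (cmod z)\<^sup>2" using pos_c[OF zb] .
    have "of_real (1 - (cmod z)\<^sup>2) * sgn l * \<phi> ((cmod l / (1 - (cmod z)\<^sup>2)) *\<^sub>R x)
        = sgn l * (of_real (1 - (cmod z)\<^sup>2) * of_real (cmod l / (1 - (cmod z)\<^sup>2))) * \<phi> x"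
      by (simp add: cdual_scale[OF cs cd])
    also have "\<dots> = sgn l * of_real (cmod l) * \<phi> x"
    proof -
      have "(1 - (cmod z)\<^sup>2) * (cmod l / (1 - (cmod z)\<^sup>2)) = cmod l" using c by simp
      then have "(of_real (1 - (cmod z)\<^sup>2) * of_real (cmod l / (1 - (cmod z)\<^sup>2)) :: complex) = of_real (cmod l)"
        by (metis of_real_mult)
      then show ?thesis by simp
    qed
    also have "\<dots> = l * \<phi> x" by (simp add: sgn_cmod)
    finally show "case F (l, z, x) of (l', z', x') \<Rightarrow> z' = z \<and> l' * \<phi> x' = l * \<phi> x"
      by (simp add: F_def)
  qed
  have S1: "(SUP g\<in>BlochBall. Max (set (map (\<lambda>(l, z, x). cmod l * cmod (deriv g z)) (map F R)))) \<le> 1"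
  proof (rule cSUP_least)
    show "BlochBall \<noteq> {}" using zero_BlochBall by blast
    fix g assume g: "g \<in> BlochBall"
    have ne: "R \<noteq> []" using v unfolding valid_rep_def by auto
    have "\<forall>a\<in>set (map (\<lambda>(l, z, x). cmod l * cmod (deriv g z)) (map F R)). a \<le> 1"
    proof
      fix a assume "a \<in> set (map (\<lambda>(l, z, x). cmod l * cmod (deriv g z)) (map F R))"
      then obtain l z x where t: "(l, z, x) \<in> set R"
        and a: "a = cmod (of_real (1 - (cmod z)\<^sup>2) * sgn l) * cmod (deriv g z)"
        by (auto simp: F_def)
      have zb: "z \<in> ball 0 1" using v t unfolding valid_rep_def by auto
      have c: "0 < 1 - (cmod z)\<^sup>2" using pos_c[OF zb] .
      have b: "(1 - (cmod z)\<^sup>2) * cmod (deriv g z) \<le> 1" using g zb unfolding BlochBall_def by auto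
      have s: "cmod (sgn l) \<le> 1" by (simp add: norm_sgn)
      have cc: "cmod (of_real (1 - (cmod z)\<^sup>2) :: complex) = 1 - (cmod z)\<^sup>2"
        by (metis abs_of_pos norm_of_real c)
      have "a = cmod (sgn l) * ((1 - (cmod z)\<^sup>2) * cmod (deriv g z))"
        unfolding a norm_mult cc by simp
      also have "\<dots> \<le> 1 * 1" using s b c
        by (intro mult_mono) auto
      finally show "a \<le> 1" by simp
    qed
    then show "Max (set (map (\<lambda>(l, z, x). cmod l * cmod (deriv g z)) (map F R))) \<le> 1"
      using ne by (simp add: Max_le_iff)
  qed
  have N: "sum_list (map (\<lambda>(l, z, x). norm x) (map F R))
      = sum_list (map (\<lambda>(l, z, x). cmod l / (1 - (cmod z)\<^sup>2) * norm x) R)"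
    unfolding map_map
  proof (intro arg_cong[where f=sum_list] map_cong refl)
    fix t assume t: "t \<in> set R"
    obtain l z x where tl: "t = (l, z, x)" by (cases t) auto
    have zb: "z \<in> ball 0 1" using v t tl unfolding valid_rep_def by auto
    have c: "0 < 1 - (cmod z)\<^sup>2" using pos_c[OF zb] .
    show "((\<lambda>(l, z, x). norm x) \<circ> F) t = (case t of (l, z, x) \<Rightarrow> cmod l / (1 - (cmod z)\<^sup>2) * norm x)"
      using c by (simp add: tl F_def)
  qed
  have N0: "0 \<le> sum_list (map (\<lambda>(l, z, x). norm x) (map F R))"
    by (rule sum_list_nonneg) (auto split: prod.splits)
  have "(SUP g\<in>BlochBall. Max (set (map (\<lambda>(l, z, x). cmod l * cmod (deriv g z)) (map F R))))
         * sum_list (map (\<lambda>(l, z, x). norm x) (map F R)) \<le> 1 * sum_list (map (\<lambda>(l, z, x). norm x) (map F R))"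
    by (rule mult_right_mono[OF S1 N0])
  then show ?thesis using P N by (intro exI[of _ "map F R"]) simp
qed


lemma term_bound:
  assumes "g \<in> BlochBall" "z \<in> ball 0 1"
  shows "cmod l * cmod (deriv g z) \<le> cmod l / (1 - (cmod z)\<^sup>2)"
  using mult_left_mono[OF bloch_bound[OF assms], of "cmod l"] by simp

lemma bdd2a:
  assumes "valid_rep R"
  shows "bdd_above ((\<lambda>g. sum_list (map (\<lambda>(l, z, x). cmod l * cmod (deriv g z)) R)) ` BlochBall)"
proof (rule bdd_aboveI2)
  fix g assume g: "g \<in> BlochBall"
  show "sum_list (map (\<lambda>(l, z, x). cmod l * cmod (deriv g z)) R)
      \<le> sum_list (map (\<lambda>(l, z, x). cmod l / (1 - (cmod z)\<^sup>2)) R)"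
  proof (rule sum_list_mono)
    fix t assume t: "t \<in> set R"
    obtain l z x where tl: "t = (l, z, x)" by (cases t) auto
    have zb: "z \<in> ball 0 1" using assms t tl unfolding valid_rep_def by auto
    show "(case t of (l, z, x) \<Rightarrow> cmod l * cmod (deriv g z)) \<le> (case t of (l, z, x) \<Rightarrow> cmod l / (1 - (cmod z)\<^sup>2))"
      using term_bound[OF g zb] tl by simp
  qed
qed

lemma bdd2b:
  assumes "valid_rep R"
  shows "bdd_above ((\<lambda>g. sum_list (map (\<lambda>(l, z, x). cmod l * cmod (deriv g z) * norm x) R)) ` BlochBall)"
proof (rule bdd_aboveI2)
  fix g assume g: "g \<in> BlochBall"
  show "sum_list (map (\<lambda>(l, z, x). cmod l * cmod (deriv g z) * norm x) R)
      \<le> sum_list (map (\<lambda>(l, z, x). cmod l / (1 - (cmod z)\<^sup>2) * norm x) R)"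
  proof (rule sum_list_mono)
    fix t assume t: "t \<in> set R"
    obtain l z x where tl: "t = (l, z, x)" by (cases t) auto
    have zb: "z \<in> ball 0 1" using assms t tl unfolding valid_rep_def by auto
    show "(case t of (l, z, x) \<Rightarrow> cmod l * cmod (deriv g z) * norm x) \<le> (case t of (l, z, x) \<Rightarrow> cmod l / (1 - (cmod z)\<^sup>2) * norm x)"
      using mult_right_mono[OF term_bound[OF g zb], of "norm x" l] tl by simp
  qed
qed

lemma tgt2_nonneg:
  assumes "valid_rep R"
  shows "0 \<le> (SUP g\<in>BlochBall. sum_list (map (\<lambda>(l, z, x). cmod l * cmod (deriv g z) * norm x) R))"
proof -
  have "0 \<le> sum_list (map (\<lambda>(l, z, x). cmod l * cmod (deriv (\<lambda>_. 0) z) * norm x) R)"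
    by (rule sum_list_nonneg) auto
  also have "\<dots> \<le> (SUP g\<in>BlochBall. sum_list (map (\<lambda>(l, z, x). cmod l * cmod (deriv g z) * norm x) R))"
    by (rule cSUP_upper[OF zero_BlochBall bdd2b[OF assms]])
  finally show ?thesis .
qed

lemma tgt1_nonneg:
  assumes "valid_rep R"
  shows "0 \<le> sum_list (map (\<lambda>(l, z, x). cmod l / (1 - (cmod z)\<^sup>2) * norm x) R)"
proof (rule sum_list_nonneg)
  fix a assume "a \<in> set (map (\<lambda>(l, z, x). cmod l / (1 - (cmod z)\<^sup>2) * norm x) R)"
  then obtain l z x where t: "(l, z, x) \<in> set R" and a: "a = cmod l / (1 - (cmod z)\<^sup>2) * norm x" by auto
  have zb: "z \<in> ball 0 1" using assms t unfolding valid_rep_def by auto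
  show "0 \<le> a" using pos_c[OF zb] a by simp
qed

lemma part2_le:
  assumes v: "valid_rep R"
  shows "(SUP g\<in>BlochBall. sum_list (map (\<lambda>(l, z, x). cmod l * cmod (deriv g z) * norm x) R))
     \<le> (SUP g\<in>BlochBall. sum_list (map (\<lambda>(l, z, x). cmod l * cmod (deriv g z)) R))
         * Max (set (map (\<lambda>(l, z, x). norm x) R))"
proof (rule cSUP_least)
  show "BlochBall \<noteq> {}" using zero_BlochBall by blast
  define M where "M = Max (set (map (\<lambda>(l::complex, z::complex, x::'a). norm x) R))"
  define S where "S = (SUP g\<in>BlochBall. sum_list (map (\<lambda>(l, z, x). cmod l * cmod (deriv g z)) R))"
  have ne: "R \<noteq> []" using v unfolding valid_rep_def by auto
  have M0: "0 \<le> M"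
  proof -
    obtain l z x where t: "(l, z, x) \<in> set R" using ne by (metis list.set_intros(1) neq_Nil_conv prod_cases3)
    have "norm x \<le> M" unfolding M_def using t by (intro Max_ge) force+
    then show ?thesis using norm_ge_zero[of x] by linarith
  qed
  fix g assume g: "g \<in> BlochBall"
  have "sum_list (map (\<lambda>(l, z, x). cmod l * cmod (deriv g z) * norm x) R)
      \<le> sum_list (map (\<lambda>(l, z, x). M * (cmod l * cmod (deriv g z))) R)"
  proof (rule sum_list_mono)
    fix t assume t: "t \<in> set R"
    obtain l z x where tl: "t = (l, z, x)" by (cases t) auto
    have "norm x \<le> M" unfolding M_def using t tl by (intro Max_ge) force+
    then show "(case t of (l, z, x) \<Rightarrow> cmod l * cmod (deriv g z) * norm x) \<le> (case t of (l, z, x) \<Rightarrow> M * (cmod l * cmod (deriv g z)))"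
      using tl mult_right_mono[of "norm x" M "cmod l * cmod (deriv g z)"] by (simp add: mult.commute)
  qed
  also have "\<dots> = M * sum_list (map (\<lambda>(l, z, x). cmod l * cmod (deriv g z)) R)"
    by (rule sum_list_case_mult)
  also have "\<dots> \<le> M * S" unfolding S_def
    by (intro mult_left_mono[OF _ M0] cSUP_upper[OF g bdd2a[OF v]])
  finally show "sum_list (map (\<lambda>(l, z, x). cmod l * cmod (deriv g z) * norm x) R) \<le> S * M"
    by (simp add: mult.commute)
qed


lemma part2_ex:
  assumes cs: "complex_scalar cm" and v: "valid_rep R" and sg: "same_gamma cm R R0"
  shows "\<exists>R'. (valid_rep R' \<and> same_gamma cm R' R0) \<and>
     (SUP g\<in>BlochBall. sum_list (map (\<lambda>(l, z, x). cmod l * cmod (deriv g z)) R'))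
         * Max (set (map (\<lambda>(l, z, x). norm x) R'))
     \<le> (SUP g\<in>BlochBall. sum_list (map (\<lambda>(l, z, x). cmod l * cmod (deriv g z) * norm x) R))"
proof -
  define F where "F = (\<lambda>(l::complex, z::complex, x::'a).
     (l * of_real (norm x), z, (1 / norm x) *\<^sub>R x))"
  have P: "valid_rep (map F R) \<and> same_gamma cm (map F R) R0"
  proof (rule same_gamma_map[OF cs v sg])
    fix l z x and \<phi> :: "'a \<Rightarrow> complex"
    assume t: "(l, z, x) \<in> set R" and cd: "cdual cm \<phi>"
    have "l * of_real (norm x) * \<phi> ((1 / norm x) *\<^sub>R x) = l * \<phi> x"
    proof (cases "x = 0")
      case True
      have "\<phi> 0 = \<phi> (0 *\<^sub>R 0)" by simp
      also have "\<dots> = 0" by (simp only: cdual_scale[OF cs cd]) simp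
      finally show ?thesis using True by simp
    next
      case False
      have "l * of_real (norm x) * \<phi> ((1 / norm x) *\<^sub>R x)
          = l * (of_real (norm x) * of_real (1 / norm x)) * \<phi> x"
        by (simp only: cdual_scale[OF cs cd] mult.assoc)
      also have "(of_real (norm x) * of_real (1 / norm x) :: complex) = 1"
        using False by (metis divide_self_if norm_eq_zero of_real_1 of_real_mult times_divide_eq_right mult_1_right)
      finally show ?thesis by simp
    qed
    then show "case F (l, z, x) of (l', z', x') \<Rightarrow> z' = z \<and> l' * \<phi> x' = l * \<phi> x"
      by (simp add: F_def)
  qed
  have E: "(SUP g\<in>BlochBall. sum_list (map (\<lambda>(l, z, x). cmod l * cmod (deriv g z)) (map F R)))
     = (SUP g\<in>BlochBall. sum_list (map (\<lambda>(l, z, x). cmod l * cmod (deriv g z) * norm x) R))"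
  proof (rule SUP_cong[OF refl])
    fix g assume g: "g \<in> BlochBall"
    show "sum_list (map (\<lambda>(l, z, x). cmod l * cmod (deriv g z)) (map F R))
       = sum_list (map (\<lambda>(l, z, x). cmod l * cmod (deriv g z) * norm x) R)"
      unfolding map_map
    proof (intro arg_cong[where f=sum_list] map_cong refl)
      fix t assume t: "t \<in> set R"
      obtain l z x where tl: "t = (l, z, x)" by (cases t) auto
      show "((\<lambda>(l, z, x). cmod l * cmod (deriv g z)) \<circ> F) t = (case t of (l, z, x) \<Rightarrow> cmod l * cmod (deriv g z) * norm x)"
        by (simp add: tl F_def norm_mult)
    qed
  qed
  have ne: "R \<noteq> []" using v unfolding valid_rep_def by auto
  have M1: "Max (set (map (\<lambda>(l, z, x). norm x) (map F R))) \<le> 1"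
  proof -
    have "\<forall>a\<in>set (map (\<lambda>(l, z, x). norm x) (map F R)). a \<le> 1"
    proof
      fix a assume "a \<in> set (map (\<lambda>(l, z, x). norm x) (map F R))"
      then obtain l z x where a: "a = norm ((1 / norm x) *\<^sub>R (x::'a))"
        by (auto simp: F_def)
      show "a \<le> 1" unfolding a by (cases "x = 0") simp_all
    qed
    then show ?thesis using ne by (simp add: Max_le_iff)
  qed
  have "(SUP g\<in>BlochBall. sum_list (map (\<lambda>(l, z, x). cmod l * cmod (deriv g z) * norm x) R))
      * Max (set (map (\<lambda>(l, z, x). norm x) (map F R)))
    \<le> (SUP g\<in>BlochBall. sum_list (map (\<lambda>(l, z, x). cmod l * cmod (deriv g z) * norm x) R)) * 1"
    by (rule mult_left_mono[OF M1 tgt2_nonneg[OF v]])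
  then show ?thesis using P E by (intro exI[of _ "map F R"]) simp
qed

theorem proposition2p7:
  fixes cm :: "complex \<Rightarrow> 'x::banach \<Rightarrow> 'x"
    and R0 :: "(complex \<times> complex \<times> 'x) list"
  assumes "complex_scalar cm"
    and "valid_rep R0"
  shows "d1 cm R0 = Inf {sum_list (map (\<lambda>(l, z, x). cmod l / (1 - (cmod z)\<^sup>2) * norm x) R)
                        | R. valid_rep R \<and> same_gamma cm R R0} \<and>
         dinf cm R0 = Inf {(SUP g\<in>BlochBall. sum_list (map (\<lambda>(l, z, x). cmod l * cmod (deriv g z) * norm x) R))
                        | R. valid_rep R \<and> same_gamma cm R R0}"
proof -
  have r0: "valid_rep R0 \<and> same_gamma cm R0 R0" using assms(2) unfolding same_gamma_def by auto
  show ?thesis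
    unfolding d1_def dinf_def
  proof (intro conjI inf_eq[where P="\<lambda>R. valid_rep R \<and> same_gamma cm R R0", OF r0])
    show "\<And>R. valid_rep R \<and> same_gamma cm R R0 \<Longrightarrow>
      0 \<le> sum_list (map (\<lambda>(l, z, x). cmod l / (1 - (cmod z)\<^sup>2) * norm x) R)"
      using tgt1_nonneg by blast
    show "\<And>R. valid_rep R \<and> same_gamma cm R R0 \<Longrightarrow>
      sum_list (map (\<lambda>(l, z, x). cmod l / (1 - (cmod z)\<^sup>2) * norm x) R)
      \<le> (SUP g\<in>BlochBall. Max (set (map (\<lambda>(l, z, x). cmod l * cmod (deriv g z)) R)))
         * sum_list (map (\<lambda>(l, z, x). norm x) R)"
      using part1_le by blast
    show "\<And>R. valid_rep R \<and> same_gamma cm R R0 \<Longrightarrow> \<exists>R'. (valid_rep R' \<and> same_gamma cm R' R0) \<and>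
     (SUP g\<in>BlochBall. Max (set (map (\<lambda>(l, z, x). cmod l * cmod (deriv g z)) R')))
         * sum_list (map (\<lambda>(l, z, x). norm x) R')
     \<le> sum_list (map (\<lambda>(l, z, x). cmod l / (1 - (cmod z)\<^sup>2) * norm x) R)"
      using part1_ex[OF assms(1)] by blast
    show "\<And>R. valid_rep R \<and> same_gamma cm R R0 \<Longrightarrow>
      0 \<le> (SUP g\<in>BlochBall. sum_list (map (\<lambda>(l, z, x). cmod l * cmod (deriv g z) * norm x) R))"
      using tgt2_nonneg by blast
    show "\<And>R. valid_rep R \<and> same_gamma cm R R0 \<Longrightarrow>
      (SUP g\<in>BlochBall. sum_list (map (\<lambda>(l, z, x). cmod l * cmod (deriv g z) * norm x) R))
     \<le> (SUP g\<in>BlochBall. sum_list (map (\<lambda>(l, z, x). cmod l * cmod (deriv g z)) R))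
         * Max (set (map (\<lambda>(l, z, x). norm x) R))"
      using part2_le by blast
    show "\<And>R. valid_rep R \<and> same_gamma cm R R0 \<Longrightarrow> \<exists>R'. (valid_rep R' \<and> same_gamma cm R' R0) \<and>
     (SUP g\<in>BlochBall. sum_list (map (\<lambda>(l, z, x). cmod l * cmod (deriv g z)) R'))
         * Max (set (map (\<lambda>(l, z, x). norm x) R'))
     \<le> (SUP g\<in>BlochBall. sum_list (map (\<lambda>(l, z, x). cmod l * cmod (deriv g z) * norm x) R))"
      using part2_ex[OF assms(1)] by blast
  qed
qed

end
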